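(* Let $f:\mathbb{R}^n\to\mathbb{R}^n$ be continuous, $\Gamma\in\mathbb{R}^{n\times n}$, and let $s(t)$ be a solution of $\dot s(t)=f(s(t))$. Let $L=(l_{ij})\in\mathbb{R}^{m\times m}$ be irreducible with $\mathrm{Rank}(L)=m-1$, $l_{ij}\ge 0$ for $i\ne j$ and $\sum_{j=1}^m l_{ij}=0$ for every $i$, and let $\varepsilon>0$. Consider the pinning-controlled system $$\frac{dx_1(t)}{dt}=f(x_1(t))+c\sum_{j=1}^m l_{1j}\Gamma x_j(t)-c\varepsilon(x_1(t)-s(t)),$$ $$\frac{dx_i(t)}{dt}=f(x_i(t))+c\sum_{j=1}^m l_{ij}\Gamma x_j(t),\qquad i=2,\dots,m.$$ Suppose there exist a positive definite $P\in\mathbb{R}^{n\times n}$, $\Delta\in\mathbb{R}^{n\times n}$ and $\epsilon>0$ with $$(x-y)^T P\big\{[f(x)-f(y)]-\Delta(x-y)\big\}\le -\epsilon (x-y)^T(x-y)\quad\text{for all }x,y\in\mathbb{R}^n,$$ that $\mathrm{Ran}(P\Delta)=\mathrm{Ran}(P\Gamma)$ (in particular if $\Delta=\Gamma$), and that $P\Gamma=BB^T$ for some matrix $B$ with $P\Gamma$ positive definite on $\mathrm{Ran}(P\Gamma)$. Then, if the coupling strength $c$ is large enough, $x_i(t)-s(t)\to 0$ as $t\to\infty$ for all $i=1,\dots,m$.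
   Context: $\mathrm{Ran}(M)$ is the range of $M$; "positive definite on $\mathrm{Ran}(P\Gamma)$" means $u^TP\Gamma u>0$ for all nonzero $u\in\mathrm{Ran}(P\Gamma)$. *)

theory Defs
  imports "HOL-Analysis.Analysis"
begin

text \<open>A square matrix is irreducible iff it is not reducible, i.e. there is no
nonempty proper index set I with l_ij = 0 for all i in I and j not in I
(equivalently, it cannot be permuted to block upper-triangular form).\<close>
definition irreducible_matrix :: "real^'m^'m \<Rightarrow> bool" where
  "irreducible_matrix L \<longleftrightarrow>
     \<not> (\<exists>I. I \<noteq> {} \<and> I \<noteq> UNIV \<and> (\<forall>i\<in>I. \<forall>j. j \<notin> I \<longrightarrow> L $ i $ j = 0))"

definition pos_def_matrix :: "real^'n^'n \<Rightarrow> bool" where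
  "pos_def_matrix P \<longleftrightarrow> transpose P = P \<and> (\<forall>x. x \<noteq> 0 \<longrightarrow> x \<bullet> (P *v x) > 0)"

definition Ran :: "real^'n^'m \<Rightarrow> (real^'m) set" where
  "Ran M = range (\<lambda>x. M *v x)"

end

theory Submission
  imports Defs
begin


lemma quad_lower_bound:
  fixes q :: "'a::euclidean_space \<Rightarrow> real"
  assumes cont: "continuous_on UNIV q" and hom: "\<And>x r. q (r *\<^sub>R x) = r^2 * q x"
    and pos: "\<And>x. x \<noteq> 0 \<Longrightarrow> q x > 0"
  shows "\<exists>k>0. \<forall>x. k * (norm x)^2 \<le> q x"
proof -
  obtain b :: 'a where b: "b \<in> Basis" using nonempty_Basis by blast
  have ne: "sphere (0::'a) 1 \<noteq> {}" using b by (auto simp: sphere_def intro!: exI[of _ b])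
  obtain x0 where x0: "x0 \<in> sphere 0 1" "\<And>y. y \<in> sphere 0 1 \<Longrightarrow> q x0 \<le> q y"
    using continuous_attains_inf[OF compact_sphere ne continuous_on_subset[OF cont]] by blast
  have k: "q x0 > 0" using x0(1) pos[of x0] by (metis mem_sphere_0 norm_zero zero_neq_one)
  have "q x0 * (norm x)^2 \<le> q x" for x
  proof (cases "x = 0")
    case True
    then show ?thesis using hom[of 0 0] by simp
  next
    case False
    have "q x0 \<le> q ((1/norm x) *\<^sub>R x)" using x0(2)[of "(1/norm x) *\<^sub>R x"] False by auto
    also have "\<dots> = q x / (norm x)^2" using hom[of "1/norm x" x] by (simp add: power_divide)
    finally show ?thesis using False by (simp add: field_simps)
  qed
  then show ?thesis using k by blast
qed

lemma norm_sq_vec: "(norm (y::'a::real_inner^'m))^2 = (\<Sum>i\<in>UNIV. (norm (y$i))^2)"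
  by (simp add: power2_norm_eq_inner inner_vec_def)

lemma lap_pd:
  fixes w :: "'m::finite \<Rightarrow> 'm \<Rightarrow> real" and \<beta> :: real and p :: 'm
  assumes w0: "\<And>i j. w i j \<ge> 0" and bpos: "\<beta> > 0"
    and conn: "\<And>I. p \<in> I \<Longrightarrow> I \<noteq> UNIV \<Longrightarrow> \<exists>i\<in>I. \<exists>j. j \<notin> I \<and> w i j > 0"
  shows "\<exists>\<kappa>>0. \<forall>y::(real^'k)^'m. \<kappa> * (\<Sum>i\<in>UNIV. (norm (y$i))^2)
      \<le> (\<Sum>i\<in>UNIV. \<Sum>j\<in>UNIV. w i j * (norm (y$i - y$j))^2) + \<beta> * (norm (y$p))^2"
proof -
  define q where "q = (\<lambda>y::(real^'k)^'m. (\<Sum>i\<in>UNIV. \<Sum>j\<in>UNIV. w i j * (norm (y$i - y$j))^2) + \<beta> * (norm (y$p))^2)"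
  have cont: "continuous_on UNIV q" unfolding q_def by (intro continuous_intros)
  have hom: "q (r *\<^sub>R y) = r^2 * q y" for r y
  proof -
    have "q (r *\<^sub>R y) = (\<Sum>i\<in>UNIV. \<Sum>j\<in>UNIV. r^2 * (w i j * (norm (y$i - y$j))^2)) + r^2 * (\<beta> * (norm (y$p))^2)"
      unfolding q_def by (simp add: scaleR_diff_right[symmetric] power_mult_distrib mult.left_commute del: scaleR_diff_right)
    also have "\<dots> = r^2 * q y" unfolding q_def by (simp add: sum_distrib_left distrib_left)
    finally show ?thesis .
  qed
  have pos: "q y > 0" if "y \<noteq> 0" for y
  proof (rule ccontr)
    assume "\<not> q y > 0"
    have nn: "\<And>i j. w i j * (norm (y$i - y$j))^2 \<ge> 0" using w0 by simp
    have s0: "(\<Sum>i\<in>UNIV. \<Sum>j\<in>UNIV. w i j * (norm (y$i - y$j))^2) \<ge> 0" using nn by (simp add: sum_nonneg)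
    have "q y \<le> 0" using \<open>\<not> q y > 0\<close> by simp
    moreover have b0: "\<beta> * (norm (y$p))^2 \<ge> 0" using bpos by simp
    ultimately have s1: "(\<Sum>i\<in>UNIV. \<Sum>j\<in>UNIV. w i j * (norm (y$i - y$j))^2) = 0"
      and b1: "\<beta> * (norm (y$p))^2 = 0"
      using s0 unfolding q_def by linarith+
    have yp: "y$p = 0" using b1 bpos by simp
    have inner0: "\<forall>j. w i j * (norm (y$i - y$j))^2 = 0" for i
    proof -
      have "(\<Sum>j\<in>UNIV. w i j * (norm (y$i - y$j))^2) = 0"
        using s1 sum_nonneg_eq_0_iff[of UNIV "\<lambda>i. \<Sum>j\<in>UNIV. w i j * (norm (y$i - y$j))^2"] nn
        by (simp add: sum_nonneg)
      then show ?thesis using sum_nonneg_eq_0_iff[of UNIV "\<lambda>j. w i j * (norm (y$i - y$j))^2"] nn by simp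
    qed
    define I where "I = {i. y$i = 0}"
    have "I = UNIV"
    proof (rule ccontr)
      assume "I \<noteq> UNIV"
      then obtain i j where "i \<in> I" "j \<notin> I" "w i j > 0" using conn[of I] yp unfolding I_def by auto
      moreover have "w i j * (norm (y$i - y$j))^2 = 0" using inner0[of i] by blast
      ultimately show False unfolding I_def by auto
    qed
    then have "y = 0" unfolding I_def by (auto simp: vec_eq_iff)
    then show False using that by simp
  qed
  obtain k where k: "k > 0" "\<And>y. k * (norm y)^2 \<le> q y" using quad_lower_bound[OF cont hom pos] by blast
  show ?thesis using k by (auto simp: q_def norm_sq_vec intro!: exI[of _ k])
qed

lemma perron_left:
  fixes L :: "real^'m^'m"
  assumes L_irr: "\<not> (\<exists>I. I \<noteq> {} \<and> I \<noteq> UNIV \<and> (\<forall>i\<in>I. \<forall>j. j \<notin> I \<longrightarrow> L $ i $ j = 0))"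
    and L_offdiag: "\<And>i j. i \<noteq> j \<Longrightarrow> L $ i $ j \<ge> 0"
    and L_rowsum: "\<And>i. (\<Sum>j\<in>UNIV. L $ i $ j) = 0"
  shows "\<exists>\<xi>::'m\<Rightarrow>real. (\<forall>i. \<xi> i > 0) \<and> (\<forall>j. (\<Sum>i\<in>UNIV. \<xi> i * L$i$j) = 0)"
proof -
  have L1: "L *v vec 1 = 0" using L_rowsum by (simp add: vec_eq_iff matrix_vector_mult_def)
  have "\<not> (\<exists>B. B ** L = mat 1)"
    proof -
    have "vec 1 \<noteq> (0::real^'m)" by (simp add: vec_eq_iff)
    then show ?thesis using matrix_left_invertible_ker[of L] L1 by blast
  qed
  have "\<exists>v. v \<noteq> 0 \<and> transpose L *v v = 0"
  proof (rule ccontr)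
    assume "\<not> ?thesis"
    then obtain B where "B ** transpose L = mat 1" using matrix_left_invertible_ker[of "transpose L"] by blast
    then have "transpose L ** B = mat 1" using matrix_left_right_inverse by blast
    then have "transpose B ** L = mat 1"
      by (metis matrix_transpose_mul transpose_mat transpose_transpose)
    then show False using \<open>\<not> (\<exists>B. B ** L = mat 1)\<close> by blast
  qed
  then obtain v where v: "v \<noteq> 0" "transpose L *v v = 0" by blast
  have col: "(\<Sum>i\<in>UNIV. v$i * L$i$j) = 0" for j
    using v(2) by (simp add: vec_eq_iff matrix_vector_mult_def transpose_def mult.commute)
  define a where "a i = \<bar>v$i\<bar>" for i
  have ge: "(\<Sum>i\<in>UNIV. a i * L$i$j) \<ge> 0" for j
  proof -
    have e1: "(\<Sum>i\<in>UNIV. a i * L$i$j) = a j * L$j$j + (\<Sum>i\<in>UNIV-{j}. a i * L$i$j)"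
      by (simp add: sum.remove)
    have e2: "v$j * L$j$j = - (\<Sum>i\<in>UNIV-{j}. v$i * L$i$j)"
      using col[of j] sum.remove[of UNIV j "\<lambda>i. v$i * L$i$j"] by simp
    have "- \<bar>L$j$j\<bar> \<le> L$j$j" by simp
    then have "\<bar>v$j\<bar> * (- \<bar>L$j$j\<bar>) \<le> \<bar>v$j\<bar> * L$j$j" by (rule mult_left_mono) simp
    then have h1: "a j * L$j$j \<ge> - \<bar>v$j * L$j$j\<bar>" unfolding a_def by (simp add: abs_mult)
    have h2: "\<bar>v$j * L$j$j\<bar> = \<bar>\<Sum>i\<in>UNIV-{j}. v$i * L$i$j\<bar>" using e2 by simp
    have h3: "\<bar>\<Sum>i\<in>UNIV-{j}. v$i * L$i$j\<bar> \<le> (\<Sum>i\<in>UNIV-{j}. \<bar>v$i * L$i$j\<bar>)" by (rule sum_abs)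
    have h4: "(\<Sum>i\<in>UNIV-{j}. \<bar>v$i * L$i$j\<bar>) = (\<Sum>i\<in>UNIV-{j}. a i * L$i$j)"
      by (rule sum.cong) (auto simp: a_def abs_mult L_offdiag)
    show ?thesis using e1 h1 h2 h3 h4 by linarith
  qed
  have tot: "(\<Sum>j\<in>UNIV. \<Sum>i\<in>UNIV. a i * L$i$j) = 0"
    by (subst sum.swap) (simp add: sum_distrib_left[symmetric] L_rowsum)
  have colA: "(\<Sum>i\<in>UNIV. a i * L$i$j) = 0" for j
    using sum_nonneg_eq_0_iff[of UNIV "\<lambda>j. \<Sum>i\<in>UNIV. a i * L$i$j"] tot ge by auto
  define I where "I = {i. a i > 0}"
  have "I \<noteq> {}" using v(1) unfolding I_def a_def by (auto simp: vec_eq_iff)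
  have "I = UNIV"
  proof (rule ccontr)
    assume "I \<noteq> UNIV"
    then obtain i j where ij: "i \<in> I" "j \<notin> I" "L$i$j \<noteq> 0" using L_irr \<open>I \<noteq> {}\<close> by blast
    have ij': "i \<noteq> j" using ij by auto
    have aj: "a j = 0" using ij(2) unfolding I_def a_def by auto
    have "0 = (\<Sum>k\<in>UNIV. a k * L$k$j)" using colA by simp
    also have "\<dots> = (\<Sum>k\<in>UNIV-{j}. a k * L$k$j)" using aj sum.remove[of UNIV j "\<lambda>k. a k * L$k$j"] by simp
    also have "\<dots> \<ge> a i * L$i$j"
      by (rule member_le_sum) (use ij' L_offdiag in \<open>auto simp: a_def\<close>)
    finally have "a i * L$i$j \<le> 0" .
    moreover have "a i * L$i$j > 0" using ij ij' L_offdiag[of i j] unfolding I_def by auto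
    ultimately show False by simp
  qed
  then show ?thesis using colA unfolding I_def by (intro exI[of _ a]) auto
qed



lemma inner_BBt:
  fixes B :: "real^'k^'n"
  shows "E \<bullet> ((B ** transpose B) *v u) = (transpose B *v E) \<bullet> (transpose B *v u)"
proof -
  have "(B ** transpose B) *v u = B *v (transpose B *v u)" by (metis matrix_vector_mul_assoc)
  moreover have "E \<bullet> (B *v w) = (transpose B *v E) \<bullet> w" for w by (simp add: dot_lmul_matrix)
  ultimately show ?thesis by simp
qed

lemma sym_inner:
  fixes P :: "real^'n^'n"
  assumes "transpose P = P"
  shows "a \<bullet> (P *v b) = b \<bullet> (P *v a)"
proof -
  have "a \<bullet> (P *v b) = (transpose P *v a) \<bullet> b" by (simp add: dot_lmul_matrix)
  then show ?thesis using assms by (simp add: inner_commute)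
qed

lemma deriv_quad:
  fixes e :: "real \<Rightarrow> real^'n" and P :: "real^'n^'n"
  assumes sym: "transpose P = P" and d: "(e has_vector_derivative d) (at t within S)"
  shows "((\<lambda>\<tau>. e \<tau> \<bullet> (P *v e \<tau>)) has_real_derivative 2 * (e t \<bullet> (P *v d))) (at t within S)"
proof -
  have dP: "((\<lambda>\<tau>. P *v e \<tau>) has_vector_derivative P *v d) (at t within S)"
    using bounded_linear.has_vector_derivative[OF matrix_vector_mul_bounded_linear d] .
  have "((\<lambda>\<tau>. e \<tau> \<bullet> (P *v e \<tau>)) has_derivative
      (\<lambda>h. e t \<bullet> (h *\<^sub>R (P *v d)) + (h *\<^sub>R d) \<bullet> (P *v e t))) (at t within S)"
    using has_derivative_inner[OF d[unfolded has_vector_derivative_def] dP[unfolded has_vector_derivative_def]] .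
  moreover have "(\<lambda>h. e t \<bullet> (h *\<^sub>R (P *v d)) + (h *\<^sub>R d) \<bullet> (P *v e t)) = (\<lambda>h. (2 * (e t \<bullet> (P *v d))) * h)"
    using sym_inner[OF sym, of d "e t"] by (auto simp: algebra_simps)
  ultimately show ?thesis by (simp add: has_field_derivative_def)
qed

lemma lap_identity:
  fixes \<xi> :: "'m::finite \<Rightarrow> real" and L :: "real^'m^'m" and y :: "'m \<Rightarrow> 'a::real_inner"
  assumes rows: "\<And>i. (\<Sum>j\<in>UNIV. L $ i $ j) = 0" and cols: "\<And>j. (\<Sum>i\<in>UNIV. \<xi> i * L$i$j) = 0"
  shows "(\<Sum>i\<in>UNIV. \<Sum>j\<in>UNIV. \<xi> i * L$i$j * (y i \<bullet> y j))
       = - (1/2) * (\<Sum>i\<in>UNIV. \<Sum>j\<in>UNIV. \<xi> i * L$i$j * (norm (y i - y j))^2)"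
proof -
  have n: "(norm (y i - y j))^2 = y i \<bullet> y i + y j \<bullet> y j - 2 * (y i \<bullet> y j)" for i j
    by (simp add: power2_norm_eq_inner inner_diff inner_commute)
  have A1: "(\<Sum>j\<in>UNIV. \<xi> i * L$i$j * (y i \<bullet> y i)) = (\<xi> i * (y i \<bullet> y i)) * (\<Sum>j\<in>UNIV. L$i$j)" for i
    by (simp add: sum_distrib_left mult.commute mult.left_commute)
  have A: "(\<Sum>i\<in>UNIV. \<Sum>j\<in>UNIV. \<xi> i * L$i$j * (y i \<bullet> y i)) = 0"
    by (simp only: A1 rows) simp
  have B1: "(\<Sum>i\<in>UNIV. \<xi> i * L$i$j * (y j \<bullet> y j)) = (\<Sum>i\<in>UNIV. \<xi> i * L$i$j) * (y j \<bullet> y j)" for j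
    by (simp add: sum_distrib_right)
  have B: "(\<Sum>i\<in>UNIV. \<Sum>j\<in>UNIV. \<xi> i * L$i$j * (y j \<bullet> y j)) = 0"
    by (subst sum.swap, simp only: B1 cols, simp)
  have C: "\<xi> i * L$i$j * (norm (y i - y j))^2 = \<xi> i * L$i$j * (y i \<bullet> y i) + \<xi> i * L$i$j * (y j \<bullet> y j)
     - 2 * (\<xi> i * L$i$j * (y i \<bullet> y j))" for i j
    unfolding n by (simp add: right_diff_distrib distrib_left)
  have "(\<Sum>i\<in>UNIV. \<Sum>j\<in>UNIV. \<xi> i * L$i$j * (norm (y i - y j))^2)
      = (\<Sum>i\<in>UNIV. \<Sum>j\<in>UNIV. \<xi> i * L$i$j * (y i \<bullet> y i))
        + (\<Sum>i\<in>UNIV. \<Sum>j\<in>UNIV. \<xi> i * L$i$j * (y j \<bullet> y j))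
        - 2 * (\<Sum>i\<in>UNIV. \<Sum>j\<in>UNIV. \<xi> i * L$i$j * (y i \<bullet> y j))"
    by (simp only: C sum.distrib sum_subtractf sum_distrib_left)
  then show ?thesis using A B by simp
qed



lemma decay:
  fixes W W' :: "real \<Rightarrow> real" and \<alpha> t :: real
  assumes d: "\<And>t. t \<ge> 0 \<Longrightarrow> (W has_real_derivative W' t) (at t within {0..})"
    and le: "\<And>t. t \<ge> 0 \<Longrightarrow> W' t \<le> - \<alpha> * W t"
    and t: "t \<ge> 0"
  shows "W t \<le> W 0 * exp (- \<alpha> * t)"
proof -
  define h where "h \<tau> = - (W \<tau> * exp (\<alpha> * \<tau>))" for \<tau>
  have dh: "(h has_real_derivative - (W' \<tau> * exp (\<alpha> * \<tau>) + W \<tau> * (exp (\<alpha> * \<tau>) * \<alpha>))) (at \<tau> within {0..})"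
    if "\<tau> \<ge> 0" for \<tau>
    unfolding h_def using d[OF that]
    by (auto intro!: derivative_eq_intros)
  have "h 0 \<le> h t"
  proof (rule DERIV_nonneg_imp_increasing_open[OF t])
    fix x :: real assume x: "0 < x" "x < t"
    have "at x within {0..} = at x" by (rule at_within_interior) (use x in auto)
    then have "(h has_real_derivative - (W' x * exp (\<alpha> * x) + W x * (exp (\<alpha> * x) * \<alpha>))) (at x)"
      using dh[of x] x by simp
    moreover have "- (W' x * exp (\<alpha> * x) + W x * (exp (\<alpha> * x) * \<alpha>)) \<ge> 0"
    proof -
      have "(W' x + \<alpha> * W x) * exp (\<alpha> * x) \<le> 0" using le[of x] x by (intro mult_nonpos_nonneg) auto
      then show ?thesis by (simp add: algebra_simps)
    qed
    ultimately show "\<exists>y. (h has_real_derivative y) (at x) \<and> 0 \<le> y" by blast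
  next
    have "continuous_on {0..} h" by (rule DERIV_continuous_on[OF dh]) auto
    then show "continuous_on {0..t} h" by (rule continuous_on_subset) auto
  qed
  then have "W t * exp (\<alpha> * t) \<le> W 0" unfolding h_def by simp
  then have "W t * exp (\<alpha> * t) * exp (- \<alpha> * t) \<le> W 0 * exp (- \<alpha> * t)"
    by (intro mult_right_mono) auto
  then show ?thesis by (simp add: mult.assoc exp_add[symmetric])
qed


theorem proposition3:
  fixes f :: "real^'n \<Rightarrow> real^'n"
    and \<Gamma> P \<Delta> :: "real^'n^'n"
    and s :: "real \<Rightarrow> real^'n"
    and L :: "real^'m^'m"
    and p :: 'm
    and \<epsilon> eps :: real
  assumes f_cont: "continuous_on UNIV f"
    and s_sol: "\<And>t. t \<ge> 0 \<Longrightarrow> (s has_vector_derivative f (s t)) (at t within {0..})"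
    and L_irr: "irreducible_matrix L"
    and L_rank: "rank L = CARD('m) - 1"
    and L_offdiag: "\<And>i j. i \<noteq> j \<Longrightarrow> L $ i $ j \<ge> 0"
    and L_rowsum: "\<And>i. (\<Sum>j\<in>UNIV. L $ i $ j) = 0"
    and \<epsilon>_pos: "\<epsilon> > 0"
    and P_pd: "pos_def_matrix P"
    and eps_pos: "eps > 0"
    and QUAD: "\<And>x y. (x - y) \<bullet> (P *v ((f x - f y) - \<Delta> *v (x - y))) \<le> - eps * ((x - y) \<bullet> (x - y))"
    and ran_eq: "Ran (P ** \<Delta>) = Ran (P ** \<Gamma>)"
    and B_fact: "\<exists>B :: real^'k^'n. P ** \<Gamma> = B ** transpose B"
    and PG_pd_ran: "\<And>u. u \<in> Ran (P ** \<Gamma>) \<Longrightarrow> u \<noteq> 0 \<Longrightarrow> u \<bullet> ((P ** \<Gamma>) *v u) > 0"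
  shows "\<exists>c0. \<forall>c > c0. \<forall>x :: real \<Rightarrow> 'm \<Rightarrow> real^'n.
           (\<forall>i. \<forall>t\<ge>0. ((\<lambda>\<tau>. x \<tau> i) has_vector_derivative
               (f (x t i) + c *\<^sub>R (\<Sum>j\<in>UNIV. L $ i $ j *\<^sub>R (\<Gamma> *v x t j))
                - (if i = p then (c * \<epsilon>) *\<^sub>R (x t i - s t) else 0))) (at t within {0..}))
           \<longrightarrow> (\<forall>i. ((\<lambda>t. x t i - s t) \<longlongrightarrow> 0) at_top)"
  proof -
  obtain \<xi> where \<xi>pos: "\<And>i. \<xi> i > 0" and \<xi>col: "\<And>j. (\<Sum>i\<in>UNIV. \<xi> i * L$i$j) = 0"
    using perron_left[OF L_irr[unfolded irreducible_matrix_def] L_offdiag L_rowsum] by blast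
  have Psym: "transpose P = P" using P_pd by (simp add: pos_def_matrix_def)
  obtain B :: "real^'k^'n" where BB: "P ** \<Gamma> = B ** transpose B" using B_fact by blast
  define G where "G = P ** \<Gamma>"
  have "\<exists>k>0. \<forall>E::real^'n. k * (norm E)^2 \<le> E \<bullet> (P *v E)"
  proof (rule quad_lower_bound)
    show "continuous_on UNIV (\<lambda>E::real^'n. E \<bullet> (P *v E))"
      by (intro continuous_on_inner continuous_on_id linear_continuous_on matrix_vector_mul_bounded_linear)
    show "(r *\<^sub>R E) \<bullet> (P *v (r *\<^sub>R E)) = r^2 * (E \<bullet> (P *v E))" for r and E :: "real^'n"
      by (simp add: matrix_vector_mult_scaleR power2_eq_square)
    show "E \<noteq> 0 \<Longrightarrow> E \<bullet> (P *v E) > 0" for E :: "real^'n"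
      using P_pd by (simp add: pos_def_matrix_def)
  qed
  then obtain lam where lam: "lam > 0" "\<And>E. lam * (norm E)^2 \<le> E \<bullet> (P *v E)" by blast
  obtain KP where KP: "KP > 0" "\<And>E. norm (P *v E) \<le> KP * norm E"
    using linear_bounded_pos[OF matrix_vector_mul_linear[of P]] by blast
  have Pup: "E \<bullet> (P *v E) \<le> KP * (norm E)^2" for E
  proof -
    have "E \<bullet> (P *v E) \<le> norm E * norm (P *v E)" by (rule norm_cauchy_schwarz)
    also have "\<dots> \<le> norm E * (KP * norm E)" by (rule mult_left_mono[OF KP(2)]) simp
    finally show ?thesis by (simp add: power2_eq_square mult_ac)
  qed
  obtain KB where KB: "KB > 0" "\<And>E. norm (transpose B *v E) \<le> KB * norm E"
    using linear_bounded_pos[OF matrix_vector_mul_linear[of "transpose B"]] by blast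
  have "\<forall>j. \<exists>z. (P ** \<Delta>) *v axis j 1 = G *v z"
  proof
    fix j
    have "(P ** \<Delta>) *v axis j 1 \<in> Ran (P ** \<Delta>)" unfolding Ran_def by blast
    then show "\<exists>z. (P ** \<Delta>) *v axis j 1 = G *v z" using ran_eq unfolding Ran_def G_def by auto
  qed
  then obtain zf where zf: "\<And>j. (P ** \<Delta>) *v axis j 1 = G *v zf j" by metis
  define Z :: "real^'n^'n" where "Z = (\<chi> a j. zf j $ a)"
  have GZ: "G ** Z = P ** \<Delta>"
  proof -
    have "(G ** Z) $ a $ j = (P ** \<Delta>) $ a $ j" for a j
    proof -
      have "(G ** Z) $ a $ j = (G *v zf j) $ a"
        by (simp add: matrix_matrix_mult_def matrix_vector_mult_def Z_def)
      also have "\<dots> = ((P ** \<Delta>) *v axis j 1) $ a" using zf[of j] by simp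
      also have "\<dots> = (P ** \<Delta>) $ a $ j" by (simp add: matrix_vector_mult_basis column_def)
      finally show ?thesis .
    qed
    then show ?thesis by (simp add: vec_eq_iff)
  qed
  obtain KZ where KZ: "KZ > 0" "\<And>E. norm (Z *v E) \<le> KZ * norm E"
    using linear_bounded_pos[OF matrix_vector_mul_linear[of Z]] by blast
  define M where "M = KB * KZ"
  have PDb: "E \<bullet> ((P ** \<Delta>) *v E) \<le> M * norm (transpose B *v E) * norm E" for E
  proof -
    have "(P ** \<Delta>) *v E = G *v (Z *v E)" using GZ by (metis matrix_vector_mul_assoc)
    then have "E \<bullet> ((P ** \<Delta>) *v E) = (transpose B *v E) \<bullet> (transpose B *v (Z *v E))"
      using inner_BBt[of E B] BB unfolding G_def by simp
    also have "\<dots> \<le> norm (transpose B *v E) * norm (transpose B *v (Z *v E))" by (rule norm_cauchy_schwarz)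
    also have "\<dots> \<le> norm (transpose B *v E) * (M * norm E)"
    proof (rule mult_left_mono)
      have "norm (transpose B *v (Z *v E)) \<le> KB * norm (Z *v E)" by (rule KB(2))
      also have "\<dots> \<le> KB * (KZ * norm E)" using KB(1) KZ(2) by (intro mult_left_mono) auto
      finally show "norm (transpose B *v (Z *v E)) \<le> M * norm E" by (simp add: M_def mult_ac)
    qed simp
    finally show ?thesis by (simp add: mult_ac)
  qed
  define w where "w i j = (if i = j then 0 else \<xi> i * L$i$j / 2)" for i j
  define \<beta> where "\<beta> = \<epsilon> * \<xi> p * lam / KB^2"
  have \<beta>pos: "\<beta> > 0" unfolding \<beta>_def using \<epsilon>_pos \<xi>pos[of p] lam(1) KB(1) by simp
  have "\<exists>\<kappa>>0. \<forall>y::(real^'k)^'m. \<kappa> * (\<Sum>i\<in>UNIV. (norm (y$i))^2)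
      \<le> (\<Sum>i\<in>UNIV. \<Sum>j\<in>UNIV. w i j * (norm (y$i - y$j))^2) + \<beta> * (norm (y$p))^2"
  proof (rule lap_pd)
    show "w i j \<ge> 0" for i j unfolding w_def using \<xi>pos[of i] L_offdiag[of i j] by simp
    show "\<beta> > 0" by (rule \<beta>pos)
    fix I assume I: "p \<in> I" "I \<noteq> UNIV"
    then obtain i j where ij: "i \<in> I" "j \<notin> I" "L$i$j \<noteq> 0"
      using L_irr unfolding irreducible_matrix_def by blast
    then have "i \<noteq> j" by auto
    then have "w i j > 0" unfolding w_def using ij(3) L_offdiag[of i j] \<xi>pos[of i] by simp
    then show "\<exists>i\<in>I. \<exists>j. j \<notin> I \<and> w i j > 0" using ij by blast
  qed
  then obtain \<kappa> where \<kappa>: "\<kappa> > 0" "\<And>y::(real^'k)^'m. \<kappa> * (\<Sum>i\<in>UNIV. (norm (y$i))^2)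
      \<le> (\<Sum>i\<in>UNIV. \<Sum>j\<in>UNIV. w i j * (norm (y$i - y$j))^2) + \<beta> * (norm (y$p))^2" by blast
  define \<Xi> where "\<Xi> = (\<Sum>i\<in>UNIV. \<xi> i)"
  have \<xi>le: "\<xi> i \<le> \<Xi>" for i unfolding \<Xi>_def by (rule member_le_sum) (use \<xi>pos in \<open>auto intro: less_imp_le\<close>)
  define R where "R = M^2 / (2 * eps)"
  have Rnn: "R \<ge> 0" unfolding R_def using eps_pos by simp
  define c0 where "c0 = \<Xi> * R / \<kappa>"
  have c0nn: "c0 \<ge> 0" unfolding c0_def using Rnn \<kappa>(1) \<xi>le[of p] \<xi>pos[of p] by simp
  have amgm: "M * b * a - eps * a^2 \<le> - (eps/2) * a^2 + R * b^2" for a b :: real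
  proof -
    have "0 \<le> (eps * a - M * b)^2" by simp
    then have "2 * eps * (M * b * a - eps * a^2) \<le> 2 * eps * (- (eps/2) * a^2 + R * b^2)"
      unfolding R_def using eps_pos by (simp add: power2_eq_square algebra_simps)
    then show ?thesis using eps_pos by simp
  qed
  show ?thesis
  proof (rule exI[of _ c0], rule allI, rule impI, rule allI, rule impI)
    fix c :: real and x :: "real \<Rightarrow> 'm \<Rightarrow> real^'n"
    assume c: "c > c0"
    assume hx: "\<forall>i. \<forall>t\<ge>0. ((\<lambda>\<tau>. x \<tau> i) has_vector_derivative
               (f (x t i) + c *\<^sub>R (\<Sum>j\<in>UNIV. L $ i $ j *\<^sub>R (\<Gamma> *v x t j))
                - (if i = p then (c * \<epsilon>) *\<^sub>R (x t i - s t) else 0))) (at t within {0..})"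
    define e where "e i t = x t i - s t" for i t
    define Dx where "Dx i t = f (x t i) + c *\<^sub>R (\<Sum>j\<in>UNIV. L $ i $ j *\<^sub>R (\<Gamma> *v x t j))
                - (if i = p then (c * \<epsilon>) *\<^sub>R (x t i - s t) else 0)" for i t
    define W where "W t = (\<Sum>i\<in>UNIV. \<xi> i * (e i t \<bullet> (P *v e i t)))" for t
    define W' where "W' t = (\<Sum>i\<in>UNIV. \<xi> i * (2 * (e i t \<bullet> (P *v (Dx i t - f (s t))))))" for t
    have de: "((\<lambda>\<tau>. e i \<tau>) has_vector_derivative (Dx i t - f (s t))) (at t within {0..})" if "t \<ge> 0" for i t
      unfolding e_def Dx_def using hx that s_sol[OF that] by (intro has_vector_derivative_diff) auto
    have dW: "(W has_real_derivative W' t) (at t within {0..})" if "t \<ge> 0" for t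
      unfolding W_def W'_def
      by (intro DERIV_sum DERIV_cmult deriv_quad[OF Psym] de[OF that])
    have key: "W' t \<le> - (eps / KP) * W t" if t0: "t \<ge> 0" for t
    proof -
      define E where "E i = e i t" for i
      define Y where "Y i = transpose B *v E i" for i
      have xE: "x t i = E i + s t" for i unfolding E_def e_def by simp
      have sa: "(\<Sum>j\<in>UNIV. L $ i $ j *\<^sub>R (\<Gamma> *v x t j)) = (\<Sum>j\<in>UNIV. L $ i $ j *\<^sub>R (\<Gamma> *v E j))" for i
      proof -
        have "(\<Sum>j\<in>UNIV. L $ i $ j *\<^sub>R (\<Gamma> *v x t j))
            = (\<Sum>j\<in>UNIV. L $ i $ j *\<^sub>R (\<Gamma> *v E j)) + (\<Sum>j\<in>UNIV. L $ i $ j) *\<^sub>R (\<Gamma> *v s t)"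
          by (simp add: xE matrix_vector_right_distrib scaleR_add_right sum.distrib scaleR_sum_left)
        then show ?thesis using L_rowsum[of i] by simp
      qed
      have sb: "E i \<bullet> (P *v (\<Sum>j\<in>UNIV. L $ i $ j *\<^sub>R (\<Gamma> *v E j))) = (\<Sum>j\<in>UNIV. L$i$j * (Y i \<bullet> Y j))" for i
      proof -
        have "E i \<bullet> (P *v (\<Sum>j\<in>UNIV. L $ i $ j *\<^sub>R (\<Gamma> *v E j)))
            = (\<Sum>j\<in>UNIV. L $ i $ j *\<^sub>R (\<Gamma> *v E j)) \<bullet> (P *v E i)"
          by (rule sym_inner[OF Psym])
        also have "\<dots> = (P *v E i) \<bullet> (\<Sum>j\<in>UNIV. L $ i $ j *\<^sub>R (\<Gamma> *v E j))"
          by (rule inner_commute)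
        also have "\<dots> = (\<Sum>j\<in>UNIV. L $ i $ j * ((P *v E i) \<bullet> (\<Gamma> *v E j)))"
          by (simp add: inner_sum_right)
        also have "\<dots> = (\<Sum>j\<in>UNIV. L$i$j * (Y i \<bullet> Y j))"
        proof (rule sum.cong[OF refl])
          fix j
          have "(P *v E i) \<bullet> (\<Gamma> *v E j) = (\<Gamma> *v E j) \<bullet> (P *v E i)"
            by (rule inner_commute)
          also have "\<dots> = E i \<bullet> (P *v (\<Gamma> *v E j))"
            by (rule sym_inner[OF Psym])
          also have "\<dots> = E i \<bullet> ((B ** transpose B) *v E j)" using BB by (simp add: matrix_vector_mul_assoc)
          also have "\<dots> = Y i \<bullet> Y j" unfolding Y_def by (rule inner_BBt)
          finally show "L $ i $ j * ((P *v E i) \<bullet> (\<Gamma> *v E j)) = L$i$j * (Y i \<bullet> Y j)" by simp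
        qed
        finally show ?thesis .
      qed
      have sc: "E i \<bullet> (P *v (f (x t i) - f (s t))) \<le> M * norm (Y i) * norm (E i) - eps * (norm (E i))^2" for i
      proof -
        have q: "E i \<bullet> (P *v ((f (x t i) - f (s t)) - \<Delta> *v E i)) \<le> - eps * (E i \<bullet> E i)"
          using QUAD[of "x t i" "s t"] unfolding E_def e_def by simp
        have "E i \<bullet> (P *v ((f (x t i) - f (s t)) - \<Delta> *v E i))
            = E i \<bullet> (P *v (f (x t i) - f (s t))) - E i \<bullet> ((P ** \<Delta>) *v E i)"
          by (simp add: matrix_vector_mult_diff_distrib inner_diff_right matrix_vector_mul_assoc)
        moreover have "eps * (E i \<bullet> E i) = eps * (norm (E i))^2" by (simp add: power2_norm_eq_inner)
        ultimately show ?thesis using q PDb[of "E i"] unfolding Y_def by linarith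
      qed
      have sd: "E i \<bullet> (P *v (Dx i t - f (s t))) = E i \<bullet> (P *v (f (x t i) - f (s t)))
          + c * (\<Sum>j\<in>UNIV. L$i$j * (Y i \<bullet> Y j)) - (if i = p then c * \<epsilon> * (E i \<bullet> (P *v E i)) else 0)" for i
      proof -
        have "Dx i t - f (s t) = (f (x t i) - f (s t)) + c *\<^sub>R (\<Sum>j\<in>UNIV. L $ i $ j *\<^sub>R (\<Gamma> *v E j))
               - (if i = p then (c * \<epsilon>) *\<^sub>R E i else 0)"
          unfolding Dx_def sa E_def e_def by simp
        then show ?thesis
          by (simp add: matrix_vector_right_distrib matrix_vector_mult_diff_distrib matrix_vector_mult_scaleR
              inner_add_right inner_diff_right sb)
      qed
      have per: "\<xi> i * (E i \<bullet> (P *v (Dx i t - f (s t)))) \<le> \<xi> i * (- (eps/2) * (norm (E i))^2)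
          + \<xi> i * (R * (norm (Y i))^2) + c * (\<Sum>j\<in>UNIV. \<xi> i * L$i$j * (Y i \<bullet> Y j))
          - (if i = p then c * \<epsilon> * \<xi> p * (E p \<bullet> (P *v E p)) else 0)" for i
      proof -
        have "E i \<bullet> (P *v (Dx i t - f (s t))) \<le> - (eps/2) * (norm (E i))^2 + R * (norm (Y i))^2
           + c * (\<Sum>j\<in>UNIV. L$i$j * (Y i \<bullet> Y j)) - (if i = p then c * \<epsilon> * (E i \<bullet> (P *v E i)) else 0)"
          using sd[of i] sc[of i] amgm[where a="norm (E i)" and b="norm (Y i)"] by linarith
        then have "\<xi> i * (E i \<bullet> (P *v (Dx i t - f (s t)))) \<le> \<xi> i * (- (eps/2) * (norm (E i))^2 + R * (norm (Y i))^2
           + c * (\<Sum>j\<in>UNIV. L$i$j * (Y i \<bullet> Y j)) - (if i = p then c * \<epsilon> * (E i \<bullet> (P *v E i)) else 0))"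
          using \<xi>pos[of i] by (intro mult_left_mono) auto
        also have "\<dots> = \<xi> i * (- (eps/2) * (norm (E i))^2)
          + \<xi> i * (R * (norm (Y i))^2) + c * (\<Sum>j\<in>UNIV. \<xi> i * L$i$j * (Y i \<bullet> Y j))
          - (if i = p then c * \<epsilon> * \<xi> p * (E p \<bullet> (P *v E p)) else 0)"
          by (simp add: algebra_simps sum_distrib_left)
        finally show ?thesis .
      qed
      have S1: "(\<Sum>i\<in>UNIV. \<xi> i * (E i \<bullet> (P *v (Dx i t - f (s t))))) \<le>
          (\<Sum>i\<in>UNIV. \<xi> i * (- (eps/2) * (norm (E i))^2)) + (\<Sum>i\<in>UNIV. \<xi> i * (R * (norm (Y i))^2))
          + c * (\<Sum>i\<in>UNIV. \<Sum>j\<in>UNIV. \<xi> i * L$i$j * (Y i \<bullet> Y j))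
          - c * \<epsilon> * \<xi> p * (E p \<bullet> (P *v E p))"
      proof -
        have "(\<Sum>i\<in>UNIV. \<xi> i * (E i \<bullet> (P *v (Dx i t - f (s t))))) \<le>
          (\<Sum>i\<in>UNIV. \<xi> i * (- (eps/2) * (norm (E i))^2)
          + \<xi> i * (R * (norm (Y i))^2) + c * (\<Sum>j\<in>UNIV. \<xi> i * L$i$j * (Y i \<bullet> Y j))
          - (if i = p then c * \<epsilon> * \<xi> p * (E p \<bullet> (P *v E p)) else 0))"
          by (rule sum_mono) (rule per)
        also have "\<dots> = (\<Sum>i\<in>UNIV. \<xi> i * (- (eps/2) * (norm (E i))^2)) + (\<Sum>i\<in>UNIV. \<xi> i * (R * (norm (Y i))^2))
          + c * (\<Sum>i\<in>UNIV. \<Sum>j\<in>UNIV. \<xi> i * L$i$j * (Y i \<bullet> Y j))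
          - c * \<epsilon> * \<xi> p * (E p \<bullet> (P *v E p))"
        proof -
          have "(\<Sum>i\<in>UNIV. (if i = p then c * \<epsilon> * \<xi> p * (E p \<bullet> (P *v E p)) else 0))
              = c * \<epsilon> * \<xi> p * (E p \<bullet> (P *v E p))" by simp
          then show ?thesis by (simp only: sum.distrib sum_subtractf sum_distrib_left)
        qed
        finally show ?thesis .
      qed
      define y :: "(real^'k)^'m" where "y = (\<chi> i. Y i)"
      have lapY: "(\<Sum>i\<in>UNIV. \<Sum>j\<in>UNIV. \<xi> i * L$i$j * (Y i \<bullet> Y j))
          = - (\<Sum>i\<in>UNIV. \<Sum>j\<in>UNIV. w i j * (norm (Y i - Y j))^2)"
      proof -
        have "(\<Sum>i\<in>UNIV. \<Sum>j\<in>UNIV. w i j * (norm (Y i - Y j))^2)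
            = (1/2) * (\<Sum>i\<in>UNIV. \<Sum>j\<in>UNIV. \<xi> i * L$i$j * (norm (Y i - Y j))^2)"
          unfolding sum_distrib_left
          by (intro sum.cong refl) (auto simp: w_def)
        then show ?thesis using lap_identity[OF L_rowsum \<xi>col, of Y] by simp
      qed
      have pin: "\<beta> * (norm (Y p))^2 \<le> \<epsilon> * \<xi> p * (E p \<bullet> (P *v E p))"
      proof -
        have "norm (Y p) \<le> KB * norm (E p)" unfolding Y_def by (rule KB(2))
        then have "(norm (Y p))^2 \<le> (KB * norm (E p))^2" by (intro power_mono) auto
        then have "(norm (Y p))^2 / KB^2 \<le> (norm (E p))^2" using KB(1) by (simp add: field_simps power_mult_distrib)
        then have "\<epsilon> * \<xi> p * lam * ((norm (Y p))^2 / KB^2) \<le> \<epsilon> * \<xi> p * lam * (norm (E p))^2"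
          using \<epsilon>_pos \<xi>pos[of p] lam(1) by (intro mult_left_mono) auto
        also have "\<dots> \<le> \<epsilon> * \<xi> p * (E p \<bullet> (P *v E p))"
          using lam(2)[of "E p"] \<epsilon>_pos \<xi>pos[of p] by (simp add: mult.assoc)
        finally show ?thesis unfolding \<beta>_def by simp
      qed
      have lapk: "\<kappa> * (\<Sum>i\<in>UNIV. (norm (Y i))^2)
          \<le> (\<Sum>i\<in>UNIV. \<Sum>j\<in>UNIV. w i j * (norm (Y i - Y j))^2) + \<beta> * (norm (Y p))^2"
        using \<kappa>(2)[of y] unfolding y_def by simp
      have RY: "(\<Sum>i\<in>UNIV. \<xi> i * (R * (norm (Y i))^2)) \<le> c * (\<kappa> * (\<Sum>i\<in>UNIV. (norm (Y i))^2))"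
      proof -
        have "(\<Sum>i\<in>UNIV. \<xi> i * (R * (norm (Y i))^2)) \<le> (\<Sum>i\<in>UNIV. \<Xi> * (R * (norm (Y i))^2))"
          using \<xi>le Rnn by (intro sum_mono mult_right_mono) auto
        also have "\<dots> = c0 * \<kappa> * (\<Sum>i\<in>UNIV. (norm (Y i))^2)"
          unfolding c0_def using \<kappa>(1) by (simp add: sum_distrib_left mult_ac)
        also have "\<dots> \<le> c * \<kappa> * (\<Sum>i\<in>UNIV. (norm (Y i))^2)"
          using c \<kappa>(1) by (intro mult_right_mono sum_nonneg) auto
        finally show ?thesis by (simp add: mult_ac)
      qed
      have S2: "(\<Sum>i\<in>UNIV. \<xi> i * (E i \<bullet> (P *v (Dx i t - f (s t))))) \<le> (\<Sum>i\<in>UNIV. \<xi> i * (- (eps/2) * (norm (E i))^2))"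
      proof -
        have "c * (\<kappa> * (\<Sum>i\<in>UNIV. (norm (Y i))^2)) \<le> c * ((\<Sum>i\<in>UNIV. \<Sum>j\<in>UNIV. w i j * (norm (Y i - Y j))^2) + \<beta> * (norm (Y p))^2)"
          using lapk c c0nn by (intro mult_left_mono) auto
        moreover have "c * (\<beta> * (norm (Y p))^2) \<le> c * (\<epsilon> * \<xi> p * (E p \<bullet> (P *v E p)))"
          using pin c c0nn by (intro mult_left_mono) auto
        moreover have "c * (\<Sum>i\<in>UNIV. \<Sum>j\<in>UNIV. \<xi> i * L$i$j * (Y i \<bullet> Y j))
            = - (c * (\<Sum>i\<in>UNIV. \<Sum>j\<in>UNIV. w i j * (norm (Y i - Y j))^2))" using lapY by simp
        moreover have "c * ((\<Sum>i\<in>UNIV. \<Sum>j\<in>UNIV. w i j * (norm (Y i - Y j))^2) + \<beta> * (norm (Y p))^2)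
            = c * (\<Sum>i\<in>UNIV. \<Sum>j\<in>UNIV. w i j * (norm (Y i - Y j))^2) + c * (\<beta> * (norm (Y p))^2)"
          by (rule distrib_left)
        moreover have "c * \<epsilon> * \<xi> p * (E p \<bullet> (P *v E p)) = c * (\<epsilon> * \<xi> p * (E p \<bullet> (P *v E p)))" by simp
        ultimately show ?thesis using S1 RY by linarith
      qed
      have WE: "W t \<le> KP * (\<Sum>i\<in>UNIV. \<xi> i * (norm (E i))^2)"
      proof -
        have "W t = (\<Sum>i\<in>UNIV. \<xi> i * (E i \<bullet> (P *v E i)))" unfolding W_def E_def by simp
        also have "\<dots> \<le> (\<Sum>i\<in>UNIV. \<xi> i * (KP * (norm (E i))^2))"
          using Pup \<xi>pos by (intro sum_mono mult_left_mono) (auto intro: less_imp_le)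
        finally show ?thesis by (simp add: sum_distrib_left mult_ac)
      qed
      have "W' t = 2 * (\<Sum>i\<in>UNIV. \<xi> i * (E i \<bullet> (P *v (Dx i t - f (s t)))))"
        unfolding W'_def E_def by (simp add: sum_distrib_left mult_ac)
      also have "\<dots> \<le> 2 * (\<Sum>i\<in>UNIV. \<xi> i * (- (eps/2) * (norm (E i))^2))" using S2 by simp
      also have "\<dots> = - eps * (\<Sum>i\<in>UNIV. \<xi> i * (norm (E i))^2)"
        by (simp add: sum_distrib_left mult_ac)
      also have "\<dots> \<le> - (eps / KP) * W t"
      proof -
        have "W t / KP \<le> (\<Sum>i\<in>UNIV. \<xi> i * (norm (E i))^2)" using WE KP(1) by (simp add: field_simps)
        then have "eps * (W t / KP) \<le> eps * (\<Sum>i\<in>UNIV. \<xi> i * (norm (E i))^2)"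
          using eps_pos by (intro mult_left_mono) auto
        then show ?thesis by simp
      qed
      finally show ?thesis .
    qed
    define \<alpha> where "\<alpha> = eps / KP"
    have Wdec: "W t \<le> W 0 * exp (- \<alpha> * t)" if "t \<ge> 0" for t
      using decay[of W W' "eps / KP" t, OF dW key that] unfolding \<alpha>_def by simp
    have \<alpha>pos: "\<alpha> > 0" unfolding \<alpha>_def using eps_pos KP(1) by simp
    show "\<forall>i. ((\<lambda>t. x t i - s t) \<longlongrightarrow> 0) at_top"
    proof
      fix i
      have bnd: "(norm (e i t))^2 \<le> W 0 / (\<xi> i * lam) * exp (- \<alpha> * t)" if t0: "t \<ge> 0" for t
      proof -
        have nn: "0 \<le> \<xi> j * (e j t \<bullet> (P *v e j t))" for j
        proof -
          have "0 \<le> lam * (norm (e j t))^2" using lam(1) by simp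
          also have "\<dots> \<le> e j t \<bullet> (P *v e j t)" by (rule lam(2))
          finally show ?thesis using \<xi>pos[of j] by simp
        qed
        have "\<xi> i * (lam * (norm (e i t))^2) \<le> \<xi> i * (e i t \<bullet> (P *v e i t))"
          using lam(2) \<xi>pos[of i] by (intro mult_left_mono) (auto intro: less_imp_le)
        also have "\<dots> \<le> W t" unfolding W_def by (rule member_le_sum) (use nn in auto)
        also have "\<dots> \<le> W 0 * exp (- \<alpha> * t)" by (rule Wdec[OF t0])
        finally have "(norm (e i t))^2 * (\<xi> i * lam) \<le> W 0 * exp (- \<alpha> * t)" by (simp add: mult_ac)
        then have "(norm (e i t))^2 \<le> W 0 * exp (- \<alpha> * t) / (\<xi> i * lam)"
          using \<xi>pos[of i] lam(1) by (simp add: pos_le_divide_eq)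
        then show ?thesis by simp
      qed
      have lexp: "((\<lambda>t. exp (- \<alpha> * t)) \<longlongrightarrow> 0) at_top"
      proof (rule filterlim_compose[OF exp_at_bot])
        have "LIM t at_top. (\<lambda>_. - \<alpha>) t * (\<lambda>t. t) t :> at_bot"
          by (rule filterlim_tendsto_neg_mult_at_bot[OF tendsto_const]) (use \<alpha>pos in simp, rule filterlim_ident)
        then show "filterlim (\<lambda>t. - \<alpha> * t) at_bot at_top" by simp
      qed
      have lim0: "((\<lambda>t. W 0 / (\<xi> i * lam) * exp (- \<alpha> * t)) \<longlongrightarrow> 0) at_top"
        using tendsto_mult[OF tendsto_const[of "W 0 / (\<xi> i * lam)"] lexp] by simp
      have ev: "eventually (\<lambda>t. norm ((norm (e i t))^2) \<le> W 0 / (\<xi> i * lam) * exp (- \<alpha> * t)) at_top"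
        using eventually_ge_at_top[of 0]
      proof (rule eventually_mono)
        fix t :: real assume "0 \<le> t"
        then show "norm ((norm (e i t))^2) \<le> W 0 / (\<xi> i * lam) * exp (- \<alpha> * t)" using bnd[of t] by simp
      qed
      have "((\<lambda>t. (norm (e i t))^2) \<longlongrightarrow> 0) at_top"
        by (rule Lim_null_comparison[OF ev lim0])
      then have "((\<lambda>t. sqrt ((norm (e i t))^2)) \<longlongrightarrow> sqrt 0) at_top" by (rule tendsto_real_sqrt)
      then have "((\<lambda>t. norm (x t i - s t)) \<longlongrightarrow> 0) at_top" by (simp add: e_def)
      then show "((\<lambda>t. x t i - s t) \<longlongrightarrow> 0) at_top" by (rule tendsto_norm_zero_cancel)
    qed
  qed
qed


end
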